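(* Let $\mathcal{S}$ be a state space, $\mathcal{A}$ a finite action space, $\rho$ a distribution on $\mathcal{S}$, $\pi_{\mathrm{ref}}$ a full-support policy, $\beta>0$, and $r^*:\mathcal{S}\times\mathcal{A}\to\mathbb{R}$ a bounded reward. Let $\mathbb{P}_{r^*}(y=1|s,a,a')\in[0,1]$ be a preference model satisfying $\mathbb{P}_{r^*}(y=1|s,a,a')\ge\frac12$ for all $s$ and all $a,a'\in\mathcal{A}$ with $r^*(s,a)\ge r^*(s,a')$. Then for any policy $\pi$, $$\mathrm{Cov}^{\pi^*_{r^*}|\pi}\ge\max_{\gamma>0,\bar\pi}\Big(\sqrt{\big(\gamma+2\mathbb{P}_{r^*}(\bar\pi\succ\pi)\big)\log\frac{1+\gamma}{\gamma}}+\sqrt{\frac{J_\beta(\pi^*_{r^*})-J_\beta(\bar\pi)}{2\beta}}\Big)^{-1},$$ $$\mathrm{Cov}^{\pi^*_{r^*}|\pi}\ge\max_{\gamma>0,\bar\pi}\Big(\sqrt{\big(\gamma+2\mathbb{P}_{r^*}(\pi\succ\bar\pi)\big)\log\frac{1+\gamma}{\gamma}}+\sqrt{\frac{J_\beta(\pi^*_{r^*})-J_\beta(\bar\pi)}{2\beta}}\Big)^{-1},$$ where the maxima are over $\gamma>0$ and arbitrary intermediate policies $\bar\pi$.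
   Context: $\pi^*_{r^*}(a|s)\propto\pi_{\mathrm{ref}}(a|s)e^{r^*(s,a)/\beta}$; $J_\beta(\pi):=\mathbb{E}_{s\sim\rho}[\mathbb{E}_{a\sim\pi(\cdot|s)}r^*(s,a)-\beta\mathrm{KL}(\pi(\cdot|s)\|\pi_{\mathrm{ref}}(\cdot|s))]$; $\mathrm{Cov}^{\tilde\pi|\pi}:=\mathbb{E}_{s\sim\rho,a\sim\tilde\pi(\cdot|s)}[\tilde\pi(a|s)/\pi(a|s)]$; $\mathbb{P}_{r^*}(\pi\succ\tilde\pi):=\mathbb{E}_{s\sim\rho,a\sim\pi(\cdot|s),a'\sim\tilde\pi(\cdot|s)}[\mathbb{P}_{r^*}(y=1|s,a,a')]$. *)

theory Defs
  imports "HOL-Probability.Probability"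
begin

text \<open>States: type 's with a probability measure M (the distribution rho).
Actions: a finite type 'a. A policy is a function pi s a = pi(a|s).\<close>

definition is_policy :: "('s \<Rightarrow> 'a::finite \<Rightarrow> real) \<Rightarrow> bool" where
  "is_policy p \<longleftrightarrow> (\<forall>s a. 0 \<le> p s a) \<and> (\<forall>s. (\<Sum>a\<in>UNIV. p s a) = 1)"

definition measurable_policy :: "'s measure \<Rightarrow> ('s \<Rightarrow> 'a::finite \<Rightarrow> real) \<Rightarrow> bool" where
  "measurable_policy M p \<longleftrightarrow> (\<forall>a. (\<lambda>s. p s a) \<in> borel_measurable M)"

definition pistar :: "('s \<Rightarrow> 'a::finite \<Rightarrow> real) \<Rightarrow> ('s \<Rightarrow> 'a \<Rightarrow> real) \<Rightarrow> real \<Rightarrow> 's \<Rightarrow> 'a \<Rightarrow> real" where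
  "pistar piref r \<beta> s a =
     piref s a * exp (r s a / \<beta>) / (\<Sum>b\<in>UNIV. piref s b * exp (r s b / \<beta>))"

text \<open>KL divergence KL(p(.|s) || q(.|s)) over the finite action set (0 log 0 = 0).\<close>
definition KL :: "('s \<Rightarrow> 'a::finite \<Rightarrow> real) \<Rightarrow> ('s \<Rightarrow> 'a \<Rightarrow> real) \<Rightarrow> 's \<Rightarrow> real" where
  "KL p q s = (\<Sum>a\<in>UNIV. p s a * ln (p s a / q s a))"

definition Jint :: "('s \<Rightarrow> 'a::finite \<Rightarrow> real) \<Rightarrow> ('s \<Rightarrow> 'a \<Rightarrow> real) \<Rightarrow> real \<Rightarrow> ('s \<Rightarrow> 'a \<Rightarrow> real) \<Rightarrow> 's \<Rightarrow> real" where
  "Jint r piref \<beta> p s = (\<Sum>a\<in>UNIV. p s a * r s a) - \<beta> * KL p piref s"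

definition J :: "'s measure \<Rightarrow> ('s \<Rightarrow> 'a::finite \<Rightarrow> real) \<Rightarrow> ('s \<Rightarrow> 'a \<Rightarrow> real) \<Rightarrow> real \<Rightarrow> ('s \<Rightarrow> 'a \<Rightarrow> real) \<Rightarrow> real" where
  "J M r piref \<beta> p = (\<integral>s. Jint r piref \<beta> p s \<partial>M)"

text \<open>Coverage Cov^{pt|p} = E_{s~rho, a~pt}[pt(a|s)/p(a|s)], valued in [0,\<infinity>]
  (equal to \<infinity> when p(a|s) = 0 < pt(a|s) on a set of positive measure).\<close>
definition Cov :: "'s measure \<Rightarrow> ('s \<Rightarrow> 'a::finite \<Rightarrow> real) \<Rightarrow> ('s \<Rightarrow> 'a \<Rightarrow> real) \<Rightarrow> ennreal" where
  "Cov M pt p = (\<integral>\<^sup>+ s. (\<Sum>a\<in>UNIV. ennreal (pt s a) * (ennreal (pt s a) / ennreal (p s a))) \<partial>M)"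

definition Pref :: "'s measure \<Rightarrow> ('s \<Rightarrow> 'a::finite \<Rightarrow> 'a \<Rightarrow> real) \<Rightarrow> ('s \<Rightarrow> 'a \<Rightarrow> real) \<Rightarrow> ('s \<Rightarrow> 'a \<Rightarrow> real) \<Rightarrow> real" where
  "Pref M P p p' = (\<integral>s. (\<Sum>a\<in>UNIV. \<Sum>a'\<in>UNIV. p s a * p' s a' * P s a a') \<partial>M)"

end

theory Submission
  imports Defs
begin


lemma ln_pade:
  fixes z :: real assumes "0 \<le> z"
  shows "3*z*(2+z)/(z^2+6*z+6) \<le> ln (1+z)"
proof -
  let ?g = "\<lambda>z::real. ln (1+z) - 3*z*(2+z)/(z^2+6*z+6)"
  have "?g 0 \<le> ?g z"
  proof (rule deriv_nonneg_imp_mono[of 0 z ?g "\<lambda>z. 1/(1+z) - 12*(z^2+3*z+3)/(z^2+6*z+6)^2"])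
    fix x assume x: "x \<in> {0..z}"
    then have x0: "0 \<le> x" by auto
    have d: "x^2+6*x+6 > 0" using x0 by (smt (verit) zero_le_power2)
    show "(?g has_real_derivative 1/(1+x) - 12*(x^2+3*x+3)/(x^2+6*x+6)^2) (at x)"
      using x0 d
      apply (auto intro!: derivative_eq_intros)
      apply (simp add: field_simps power2_eq_square)
      done
    have "12*(x^2+3*x+3)*(1+x) \<le> (x^2+6*x+6)^2"
      using x0 by (simp add: power2_eq_square algebra_simps)
    then show "0 \<le> 1/(1+x) - 12*(x^2+3*x+3)/(x^2+6*x+6)^2"
      using x0 d by (simp add: field_simps)
  qed (use assms in auto)
  then show ?thesis by simp
qed




lemma binpin_deriv:
  fixes \<alpha> x :: real assumes "0 < x" "x < 1"
  shows "((\<lambda>x. \<alpha>*(ln \<alpha> - ln x) + (1-\<alpha>)*(ln (1-\<alpha>) - ln (1-x)) - 2*(\<alpha>-x)^2)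
          has_real_derivative ((x-\<alpha>)*(1/(x*(1-x)) - 4))) (at x)"
  using assms
  apply (auto intro!: derivative_eq_intros)
  apply (simp add: field_simps power2_eq_square)
  done

lemma binpin_sign:
  fixes x :: real assumes "0 < x" "x < 1"
  shows "1/(x*(1-x)) - 4 \<ge> 0"
proof -
  have "0 \<le> (x - 1/2)^2" by simp
  then have "x*(1-x) \<le> 1/4" by (simp add: power2_eq_square algebra_simps)
  moreover have y: "x*(1-x) > 0" using assms by simp
  ultimately have "4 * (x*(1-x)) \<le> 1" by linarith
  then have "4 \<le> 1/(x*(1-x))" using y by (simp add: le_divide_eq)
  then show ?thesis by simp
qed

lemma bin_pinsker:
  fixes \<alpha> b :: real
  assumes a0: "0 \<le> \<alpha>" and a1: "\<alpha> \<le> 1" and b0: "0 < b" and b1: "b < 1"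
  shows "2*(\<alpha>-b)^2 \<le> \<alpha> * ln (\<alpha>/b) + (1-\<alpha>) * ln ((1-\<alpha>)/(1-b))"
proof -
  define g where "g = (\<lambda>x. \<alpha>*(ln \<alpha> - ln x) + (1-\<alpha>)*(ln (1-\<alpha>) - ln (1-x)) - 2*(\<alpha>-x)^2)"
  have eq: "\<alpha> * ln (\<alpha>/b) + (1-\<alpha>) * ln ((1-\<alpha>)/(1-b)) = g b + 2*(\<alpha>-b)^2"
  proof -
    have e1: "\<alpha> * ln (\<alpha>/b) = \<alpha>*(ln \<alpha> - ln b)"
      using b0 by (cases "\<alpha> = 0") (auto simp: ln_div a0)
    have e2: "(1-\<alpha>) * ln ((1-\<alpha>)/(1-b)) = (1-\<alpha>)*(ln (1-\<alpha>) - ln (1-b))"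
      using b1 a1 by (cases "\<alpha> = 1") (auto simp: ln_div)
    show ?thesis unfolding g_def e1 e2 by simp
  qed
  have "0 \<le> g b"
  proof (cases "0 < \<alpha> \<and> \<alpha> < 1")
    case True
    have g\<alpha>: "g \<alpha> = 0" unfolding g_def by simp
    show ?thesis
    proof (cases "\<alpha> \<le> b")
      case True
      have "g \<alpha> \<le> g b"
        apply (rule deriv_nonneg_imp_mono[of \<alpha> b g "\<lambda>x. (x-\<alpha>)*(1/(x*(1-x)) - 4)"])
        subgoal for x using \<open>0 < \<alpha> \<and> \<alpha> < 1\<close> b1 unfolding g_def by (intro binpin_deriv) auto
        subgoal for x using \<open>0 < \<alpha> \<and> \<alpha> < 1\<close> b1 binpin_sign[of x] by auto
        using True by simp
      then show ?thesis using g\<alpha> by simp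
    next
      case False
      have "g \<alpha> \<le> g b"
        apply (rule deriv_nonpos_imp_antimono[of b \<alpha> g "\<lambda>x. (x-\<alpha>)*(1/(x*(1-x)) - 4)"])
        subgoal for x using \<open>0 < \<alpha> \<and> \<alpha> < 1\<close> b0 unfolding g_def by (intro binpin_deriv) auto
        subgoal for x using \<open>0 < \<alpha> \<and> \<alpha> < 1\<close> b0 binpin_sign[of x] by (auto intro!: mult_nonpos_nonneg)
        using False by simp
      then show ?thesis using g\<alpha> by simp
    qed
  next
    case False
    then have "\<alpha> = 0 \<or> \<alpha> = 1" using a0 a1 by auto
    then show ?thesis
    proof
      assume a: "\<alpha> = 0"
      define h where "h = (\<lambda>x::real. - ln (1-x) - 2*x^2)"
      have "g b = h b" unfolding g_def h_def a by simp
      have "h 0 \<le> h b"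
        apply (rule deriv_nonneg_imp_mono[of 0 b h "\<lambda>x. 1/(1-x) - 4*x"])
        subgoal for x using b1 unfolding h_def by (auto intro!: derivative_eq_intros simp: field_simps)
        subgoal for x
        proof -
          assume x: "x \<in> {0..b}"
          then have "0 \<le> x" "x < 1" using b1 by auto
          have "0 \<le> (2*x - 1)^2" by simp
          then have "4*x*(1-x) \<le> 1" by (simp add: power2_eq_square algebra_simps)
          then show ?thesis using \<open>x < 1\<close> by (simp add: field_simps)
        qed
        using b0 by simp
      then show ?thesis using \<open>g b = h b\<close> unfolding h_def by simp
    next
      assume a: "\<alpha> = 1"
      define h where "h = (\<lambda>x::real. - ln x - 2*(1-x)^2)"
      have "g b = h b" unfolding g_def h_def a by simp
      have "h 1 \<le> h b"
        apply (rule deriv_nonpos_imp_antimono[of b 1 h "\<lambda>x. -1/x + 4*(1-x)"])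
        subgoal for x using b0 unfolding h_def by (auto intro!: derivative_eq_intros simp: field_simps)
        subgoal for x
        proof -
          assume x: "x \<in> {b..1}"
          then have "0 < x" "x \<le> 1" using b0 by auto
          have "0 \<le> (2*x - 1)^2" by simp
          then have "4*x*(1-x) \<le> 1" by (simp add: power2_eq_square algebra_simps)
          then show ?thesis using \<open>0 < x\<close> by (simp add: field_simps)
        qed
        using b1 by simp
      then show ?thesis using \<open>g b = h b\<close> unfolding h_def by simp
    qed
  qed
  then show ?thesis using eq by simp
qed




lemma ln_ge_one_minus_inv:
  fixes x :: real assumes "0 < x" shows "1 - 1/x \<le> ln x"
proof -
  have "ln (1/x) \<le> 1/x - 1" using assms by (intro ln_le_minus_one) simp
  then show ?thesis using assms by (simp add: ln_div)
qed

lemma log_sum: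
  fixes m q :: "'a \<Rightarrow> real"
  assumes fin: "finite B" and m0: "\<And>a. a \<in> B \<Longrightarrow> 0 \<le> m a" and q0: "\<And>a. a \<in> B \<Longrightarrow> 0 < q a"
  shows "sum m B * ln (sum m B / sum q B) \<le> (\<Sum>a\<in>B. m a * ln (m a / q a))"
proof (cases "sum m B = 0")
  case True
  then have "\<forall>a\<in>B. m a = 0" using sum_nonneg_eq_0_iff[OF fin] m0 by blast
  then show ?thesis using True by simp
next
  case False
  then have Mpos: "sum m B > 0" using sum_nonneg[of B m] m0 by (simp add: order_le_less)
  have "B \<noteq> {}" using False by auto
  then have Qpos: "sum q B > 0" using fin q0 by (simp add: sum_pos)
  define c where "c = sum m B / sum q B"
  have cpos: "c > 0" unfolding c_def using Mpos Qpos by simp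
  have pt: "m a * ln c + m a - q a * c \<le> m a * ln (m a / q a)" if a: "a \<in> B" for a
  proof (cases "m a = 0")
    case True then show ?thesis using q0[OF a] cpos by simp
  next
    case False
    then have ma: "m a > 0" using m0[OF a] by simp
    have "1 - 1/(m a / (q a * c)) \<le> ln (m a / (q a * c))"
      using ma q0[OF a] cpos by (intro ln_ge_one_minus_inv) simp
    also have "ln (m a / (q a * c)) = ln (m a / q a) - ln c"
      using ma q0[OF a] cpos by (simp add: ln_div ln_mult)
    finally have "1 - q a * c / m a \<le> ln (m a / q a) - ln c" by simp
    then have "m a * (1 - q a * c / m a) \<le> m a * (ln (m a / q a) - ln c)"
      using ma by (intro mult_left_mono) auto
    then show ?thesis using ma by (simp add: algebra_simps)
  qed
  have "(\<Sum>a\<in>B. m a * ln c + m a - q a * c) \<le> (\<Sum>a\<in>B. m a * ln (m a / q a))"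
    using pt by (intro sum_mono) auto
  moreover have "(\<Sum>a\<in>B. m a * ln c + m a - q a * c) = sum m B * ln c"
  proof -
    have "(\<Sum>a\<in>B. q a * c) = sum m B" unfolding c_def using Qpos
      by (simp add: sum_divide_distrib[symmetric] sum_distrib_right[symmetric])
    then show ?thesis by (simp add: sum.distrib sum_subtractf sum_distrib_right[symmetric])
  qed
  ultimately show ?thesis unfolding c_def by simp
qed

lemma sum_split_compl:
  fixes f :: "'a::finite \<Rightarrow> real" shows "sum f UNIV = sum f A + sum f (-A)"
proof -
  have "sum f (A \<union> -A) = sum f A + sum f (-A)" by (rule sum.union_disjoint) auto
  moreover have "A \<union> -A = UNIV" by auto
  ultimately show ?thesis by simp
qed

lemma pinsker:
  fixes m q :: "'a::finite \<Rightarrow> real"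
  assumes m0: "\<And>a. 0 \<le> m a" and m1: "sum m UNIV = 1"
    and q0: "\<And>a. 0 < q a" and q1: "sum q UNIV = 1"
  shows "2 * (\<Sum>a\<in>UNIV. max 0 (q a - m a))^2 \<le> (\<Sum>a\<in>UNIV. m a * ln (m a / q a))"
proof -
  define A where "A = {a. q a < m a}"
  define \<alpha> where "\<alpha> = sum m A"
  define b where "b = sum q A"
  have tv1: "(\<Sum>a\<in>UNIV. max 0 (q a - m a)) = (\<Sum>a\<in>UNIV. max 0 (m a - q a))"
  proof -
    have "(\<Sum>a\<in>UNIV. max 0 (q a - m a)) - (\<Sum>a\<in>UNIV. max 0 (m a - q a)) = (\<Sum>a\<in>UNIV. q a - m a)"
      by (simp add: sum_subtractf[symmetric]) (intro sum.cong; auto simp: max_def)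
    also have "\<dots> = 0" using m1 q1 by (simp add: sum_subtractf)
    finally show ?thesis by simp
  qed
  have tv2: "(\<Sum>a\<in>UNIV. max 0 (m a - q a)) = \<alpha> - b"
  proof -
    have "(\<Sum>a\<in>UNIV. max 0 (m a - q a)) = (\<Sum>a\<in>A. m a - q a)"
      by (rule sum.mono_neutral_cong_right) (auto simp: A_def max_def)
    then show ?thesis unfolding \<alpha>_def b_def by (simp add: sum_subtractf)
  qed
  have split: "(\<Sum>a\<in>UNIV. m a * ln (m a / q a)) = (\<Sum>a\<in>A. m a * ln (m a / q a)) + (\<Sum>a\<in>-A. m a * ln (m a / q a))"
    by (rule sum_split_compl)
  have mA: "sum m (-A) = 1 - \<alpha>" unfolding \<alpha>_def using m1 sum_split_compl[of m A] by auto
  have qA: "sum q (-A) = 1 - b" unfolding b_def using q1 sum_split_compl[of q A] by auto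
  have ls1: "\<alpha> * ln (\<alpha> / b) \<le> (\<Sum>a\<in>A. m a * ln (m a / q a))"
    unfolding \<alpha>_def b_def using m0 q0 by (intro log_sum) auto
  have ls2: "(1-\<alpha>) * ln ((1-\<alpha>) / (1-b)) \<le> (\<Sum>a\<in>-A. m a * ln (m a / q a))"
    unfolding mA[symmetric] qA[symmetric] using m0 q0 by (intro log_sum) auto
  show ?thesis
  proof (cases "A = {}")
    case True
    then have "\<alpha> = 0" "b = 0" unfolding \<alpha>_def b_def by auto
    then show ?thesis using tv1 tv2 split ls1 ls2 by simp
  next
    case False
    then have bpos: "b > 0" unfolding b_def using q0 by (simp add: sum_pos)
    have "-A \<noteq> {}"
    proof
      assume "-A = {}"
      then have "A = UNIV" by auto
      then have "sum q UNIV < sum m UNIV" unfolding A_def by (intro sum_strict_mono) auto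
      then show False using m1 q1 by simp
    qed
    then have "sum q (-A) > 0" using q0 by (simp add: sum_pos)
    then have b1: "b < 1" using qA by simp
    have a0: "0 \<le> \<alpha>" unfolding \<alpha>_def using m0 by (simp add: sum_nonneg)
    have "0 \<le> sum m (-A)" using m0 by (simp add: sum_nonneg)
    then have a1: "\<alpha> \<le> 1" using mA by simp
    have "2*(\<alpha>-b)^2 \<le> \<alpha> * ln (\<alpha>/b) + (1-\<alpha>) * ln ((1-\<alpha>)/(1-b))"
      using bin_pinsker[OF a0 a1 bpos b1] .
    then show ?thesis using tv1 tv2 split ls1 ls2 by simp
  qed
qed




lemma riemann:
  fixes p k :: "'a \<Rightarrow> real" and f F :: "real \<Rightarrow> real"
  assumes "finite A" and "\<forall>a\<in>A. 0 \<le> p a" and "sum p A \<le> 1"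
    and inc: "\<And>x y. 0 \<le> x \<Longrightarrow> x \<le> y \<Longrightarrow> y \<le> 1 \<Longrightarrow> f y * (y - x) \<le> F y - F x"
  shows "(\<Sum>a\<in>A. p a * f (\<Sum>a'\<in>{a'\<in>A. k a' \<le> k a}. p a')) \<le> F (sum p A) - F 0"
  using assms(1-3)
proof (induction "card A" arbitrary: A rule: less_induct)
  case less
  show ?case
  proof (cases "A = {}")
    case True then show ?thesis by simp
  next
    case False
    have "Max (k ` A) \<in> k ` A" using False less.prems(1) by (intro Max_in) auto
    then obtain a0 where a0: "a0 \<in> A" "k a0 = Max (k ` A)" by auto
    have amax: "\<forall>a\<in>A. k a \<le> k a0" using a0 less.prems(1) by auto
    define T where "T = {a\<in>A. k a = k a0}"
    define A' where "A' = {a\<in>A. k a < k a0}"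
    have AU: "A = A' \<union> T" and disj: "A' \<inter> T = {}" unfolding T_def A'_def using amax by force+
    have finA': "finite A'" and finT: "finite T" using less.prems(1) unfolding A'_def T_def by auto
    have "A' \<subseteq> A" unfolding A'_def by auto
    moreover have "a0 \<notin> A'" unfolding A'_def by simp
    ultimately have "A' \<subset> A" using a0(1) by blast
    then have cardlt: "card A' < card A" using less.prems(1) by (intro psubset_card_mono) auto
    have pA'0: "\<forall>a\<in>A'. 0 \<le> p a" using less.prems(2) unfolding A'_def by auto
    have pT0: "0 \<le> sum p T" using less.prems(2) unfolding T_def by (intro sum_nonneg) auto
    have sumA: "sum p A = sum p A' + sum p T" using AU disj finA' finT by (simp add: sum.union_disjoint)
    have s0: "0 \<le> sum p A'" using pA'0 by (intro sum_nonneg) auto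
    have IH: "(\<Sum>a\<in>A'. p a * f (\<Sum>a'\<in>{a'\<in>A'. k a' \<le> k a}. p a')) \<le> F (sum p A') - F 0"
      using less.hyps[OF cardlt finA' pA'0] sumA pT0 less.prems(3) by simp
    have e1: "(\<Sum>a\<in>A'. p a * f (\<Sum>a'\<in>{a'\<in>A. k a' \<le> k a}. p a')) = (\<Sum>a\<in>A'. p a * f (\<Sum>a'\<in>{a'\<in>A'. k a' \<le> k a}. p a'))"
    proof (rule sum.cong[OF refl])
      fix a assume "a \<in> A'"
      then have "{a'\<in>A. k a' \<le> k a} = {a'\<in>A'. k a' \<le> k a}" unfolding A'_def by auto
      then show "p a * f (\<Sum>a'\<in>{a'\<in>A. k a' \<le> k a}. p a') = p a * f (\<Sum>a'\<in>{a'\<in>A'. k a' \<le> k a}. p a')" by simp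
    qed
    have e2: "(\<Sum>a\<in>T. p a * f (\<Sum>a'\<in>{a'\<in>A. k a' \<le> k a}. p a')) = sum p T * f (sum p A)"
    proof -
      have "(\<Sum>a\<in>T. p a * f (\<Sum>a'\<in>{a'\<in>A. k a' \<le> k a}. p a')) = (\<Sum>a\<in>T. p a * f (sum p A))"
      proof (rule sum.cong[OF refl])
        fix a assume "a \<in> T"
        then have "{a'\<in>A. k a' \<le> k a} = A" unfolding T_def using amax by auto
        then show "p a * f (\<Sum>a'\<in>{a'\<in>A. k a' \<le> k a}. p a') = p a * f (sum p A)" by simp
      qed
      then show ?thesis by (simp add: sum_distrib_right)
    qed
    have step: "f (sum p A) * (sum p A - sum p A') \<le> F (sum p A) - F (sum p A')"
      using inc[OF s0 _ less.prems(3)] sumA pT0 by simp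
    have "(\<Sum>a\<in>A. p a * f (\<Sum>a'\<in>{a'\<in>A. k a' \<le> k a}. p a'))
        = (\<Sum>a\<in>A'. p a * f (\<Sum>a'\<in>{a'\<in>A. k a' \<le> k a}. p a')) + (\<Sum>a\<in>T. p a * f (\<Sum>a'\<in>{a'\<in>A. k a' \<le> k a}. p a'))"
      using AU disj finA' finT by (simp add: sum.union_disjoint)
    also have "\<dots> \<le> F (sum p A') - F 0 + sum p T * f (sum p A)" using e1 e2 IH by simp
    also have "\<dots> \<le> F (sum p A) - F 0" using step sumA by (simp add: algebra_simps)
    finally show ?thesis .
  qed
qed

definition hf :: "real \<Rightarrow> real \<Rightarrow> real" where "hf \<mu> x = max 0 (1 - \<mu>*x)"
definition F1 :: "real \<Rightarrow> real \<Rightarrow> real" where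
  "F1 \<mu> x = (if \<mu>*x \<le> 1 then x - \<mu>*x^2/2 else 1/(2*\<mu>))"
definition F2 :: "real \<Rightarrow> real \<Rightarrow> real" where
  "F2 \<mu> x = (if \<mu>*x \<le> 1 then (1 - (1-\<mu>*x)^3)/(3*\<mu>) else 1/(3*\<mu>))"

lemma F1_inc:
  assumes mu: "0 < \<mu>" and "0 \<le> x" "x \<le> y"
  shows "hf \<mu> y * (y - x) \<le> F1 \<mu> y - F1 \<mu> x"
proof (cases "\<mu>*y \<le> 1")
  case True
  then have x1: "\<mu>*x \<le> 1" using assms by (smt (verit) mult_left_mono)
  have "(y-x)*(1-\<mu>*y) \<le> (y-x)*(1 - \<mu>*(x+y)/2)"
    using assms by (intro mult_left_mono) (auto simp: algebra_simps)
  also have "\<dots> = (y - \<mu>*y^2/2) - (x - \<mu>*x^2/2)" by (simp add: field_simps power2_eq_square)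
  finally show ?thesis using True x1 unfolding hf_def F1_def by (simp add: mult.commute)
next
  case False
  then have hy: "hf \<mu> y = 0" unfolding hf_def by simp
  show ?thesis
  proof (cases "\<mu>*x \<le> 1")
    case True
    have "1/(2*\<mu>) - (x - \<mu>*x^2/2) = (1-\<mu>*x)^2/(2*\<mu>)" using mu by (simp add: field_simps power2_eq_square)
    also have "\<dots> \<ge> 0" using mu by simp
    finally show ?thesis using False True hy unfolding F1_def by simp
  next
    case False
    then show ?thesis using \<open>\<not> \<mu>*y \<le> 1\<close> hy unfolding F1_def by simp
  qed
qed

lemma F2_inc:
  assumes mu: "0 < \<mu>" and "0 \<le> x" "x \<le> y"
  shows "(hf \<mu> y)^2 * (y - x) \<le> F2 \<mu> y - F2 \<mu> x"
proof (cases "\<mu>*y \<le> 1")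
  case True
  then have x1: "\<mu>*x \<le> 1" using assms by (smt (verit) mult_left_mono)
  define X where "X = 1 - \<mu>*x"
  define Y where "Y = 1 - \<mu>*y"
  have Y0: "0 \<le> Y" using True unfolding Y_def by simp
  have XY: "Y \<le> X" using assms unfolding X_def Y_def by (simp add: mult_left_mono)
  have yx: "y - x = (X - Y)/\<mu>" using mu unfolding X_def Y_def by (simp add: field_simps)
  have key: "3*(Y^2*(X-Y)) \<le> X^3 - Y^3"
  proof -
    have "X^3 - Y^3 - 3*(Y^2*(X-Y)) = (X-Y)^2*(X+2*Y)" by (simp add: algebra_simps power2_eq_square power3_eq_cube)
    also have "\<dots> \<ge> 0" using Y0 XY by simp
    finally show ?thesis by simp
  qed
  have "(hf \<mu> y)^2 * (y - x) = Y^2*(X-Y)/\<mu>" unfolding hf_def using Y0 yx by (simp add: Y_def)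
  also have "\<dots> = (3*(Y^2*(X-Y)))/(3*\<mu>)" by simp
  also have "\<dots> \<le> (X^3 - Y^3)/(3*\<mu>)" using divide_right_mono[OF key, of "3*\<mu>"] mu by simp
  also have "\<dots> = F2 \<mu> y - F2 \<mu> x" unfolding F2_def X_def Y_def using True x1 mu by (simp add: field_simps)
  finally show ?thesis .
next
  case False
  then have hy: "hf \<mu> y = 0" unfolding hf_def by simp
  show ?thesis
  proof (cases "\<mu>*x \<le> 1")
    case True
    have "0 \<le> (1-\<mu>*x)^3/(3*\<mu>)" using True mu by simp
    also have "(1-\<mu>*x)^3/(3*\<mu>) = 1/(3*\<mu>) - (1 - (1-\<mu>*x)^3)/(3*\<mu>)" using mu by (simp add: field_simps)
    finally show ?thesis using False True hy unfolding F2_def by simp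
  next
    case False
    then show ?thesis using \<open>\<not> \<mu>*y \<le> 1\<close> hy unfolding F2_def by simp
  qed
qed

definition ell :: "real \<Rightarrow> real" where "ell g = 3*(2*g+1)/(6*g^2+6*g+1)"

lemma ell_le_L: assumes "0 < g" shows "ell g \<le> ln (1 + 1/g)"
proof -
  have D: "6*g^2+6*g+1 > 0" using assms by (simp add: add_pos_pos)
  have n: "3*(1/g)*(2+1/g) = 3*(2*g+1)/g^2" using assms by (simp add: field_simps power2_eq_square)
  have dd: "(1/g)^2+6*(1/g)+6 = (6*g^2+6*g+1)/g^2" using assms by (simp add: field_simps power2_eq_square)
  have "ell g = 3*(1/g)*(2+1/g)/((1/g)^2+6*(1/g)+6)"
    unfolding ell_def n dd using assms D by simp
  also have "\<dots> \<le> ln (1 + 1/g)" using assms by (intro ln_pade) simp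
  finally show ?thesis .
qed

lemma ell_lower:
  assumes "0 < g" shows "1/(g+1/2) + 1/(12*(g+1/2)^3) \<le> ell g"
proof -
  define w where "w = g + 1/2"
  have w: "w > 1/2" using assms unfolding w_def by simp
  have d: "12*w^2 - 1 > 0"
  proof -
    have "w*w > 1/2*(1/2)" using w by (intro mult_strict_mono) auto
    then show ?thesis by (simp add: power2_eq_square)
  qed
  have e: "ell g = 12*w/(12*w^2-1)"
  proof -
    have a: "12*w^2 - 1 = 2*(6*g^2+6*g+1)" unfolding w_def by (simp add: power2_eq_square algebra_simps)
    have b: "12*w = 2*(3*(2*g+1))" unfolding w_def by (simp add: algebra_simps)
    show ?thesis unfolding a b ell_def by (simp only: mult_divide_mult_cancel_left_if) simp
  qed
  have "12*w/(12*w^2-1) - (1/w + 1/(12*w^3)) = 1/(12*w^3*(12*w^2-1))"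
    using w d by (simp add: field_simps power2_eq_square power3_eq_cube)
  also have "\<dots> > 0" using w d by simp
  finally show ?thesis using e unfolding w_def by simp
qed

lemma P1:
  assumes g: "0 < g" and mu: "0 < \<mu>" "\<mu> \<le> 1"
  shows "1 - \<mu>/2 + \<mu>^2/24 \<le> g*\<mu> + ell g/(4*\<mu>)"
proof -
  define w where "w = g + 1/2"
  define z where "z = \<mu>*w"
  have w: "w > 1/2" using g unfolding w_def by simp
  have z: "z > 0" unfolding z_def using w mu by simp
  have "g*\<mu> + (1/w + 1/(12*w^3))/(4*\<mu>) \<le> g*\<mu> + ell g/(4*\<mu>)"
    using ell_lower[OF g] mu unfolding w_def by (simp add: divide_right_mono)
  moreover have "g*\<mu> + (1/w + 1/(12*w^3))/(4*\<mu>) = z - \<mu>/2 + 1/(4*z) + \<mu>^2/(48*z^3)"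
  proof -
    have gw: "g = w - 1/2" unfolding w_def by simp
    have "w \<noteq> 0" "\<mu> \<noteq> 0" using w mu by auto
    then show ?thesis unfolding z_def gw by (simp add: field_simps power2_eq_square power3_eq_cube)
  qed
  moreover have "1 - \<mu>/2 + \<mu>^2/24 \<le> z - \<mu>/2 + 1/(4*z) + \<mu>^2/(48*z^3)"
  proof -
    have q: "z + 1/(4*z) - 1 = (2*z-1)^2/(4*z)" using z by (simp add: field_simps power2_eq_square)
    show ?thesis
    proof (cases "z \<le> 3/4")
      case True
      have "z^3 \<le> (3/4)^3" using True z by (intro power_mono) auto
      then have "z^3 \<le> 1/2" by (simp add: power3_eq_cube)
      then have "\<mu>^2*(2*z^3) \<le> \<mu>^2*1" by (intro mult_left_mono) auto
      then have "\<mu>^2/24 \<le> \<mu>^2/(48*z^3)" using z by (simp add: field_simps)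
      moreover have "0 \<le> (2*z-1)^2/(4*z)" using z by simp
      ultimately show ?thesis using q by linarith
    next
      case False
      have "z/6 \<le> (2*z-1)^2"
      proof -
        have "(2*z-1)^2 - z/6 = (z - 3/4)*(4*z - 7/6) + 1/8" by (simp add: algebra_simps power2_eq_square)
        moreover have "(z - 3/4)*(4*z - 7/6) \<ge> 0" using False by (intro mult_nonneg_nonneg) auto
        ultimately show ?thesis by simp
      qed
      then have "1/24 \<le> (2*z-1)^2/(4*z)" using z by (simp add: field_simps)
      moreover have "\<mu>^2 \<le> 1" using mu by (simp add: power_le_one)
      moreover have "0 \<le> \<mu>^2/(48*z^3)" using z by simp
      ultimately show ?thesis using q by (smt (verit) divide_right_mono)
    qed
  qed
  ultimately show ?thesis by linarith
qed

lemma P2: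
  assumes g: "0 < g" and mu: "1 \<le> \<mu>"
  shows "5/(8*\<mu>) \<le> g*\<mu> + ell g/(4*\<mu>)"
proof -
  have D: "6*g^2+6*g+1 > 0" using g by (simp add: add_pos_pos)
  have cub: "0 \<le> 48*g^3 + 18*g^2 - 10*g + 1"
  proof -
    have "48*g^3 + 18*g^2 - 10*g + 1 = (g - 1/6)^2*(48*g+34) + 1/18"
      by (simp add: algebra_simps power2_eq_square power3_eq_cube)
    moreover have "(g - 1/6)^2*(48*g+34) \<ge> 0" using g by simp
    ultimately show ?thesis by simp
  qed
  have "5/2 \<le> 4*g + ell g"
  proof -
    have "4*g + ell g - 5/2 = (48*g^3 + 18*g^2 - 10*g + 1)/(2*(6*g^2+6*g+1))"
      unfolding ell_def using D by (simp add: field_simps power2_eq_square power3_eq_cube)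
    also have "\<dots> \<ge> 0" using cub D by simp
    finally show ?thesis by simp
  qed
  also have "4*g \<le> 4*g*\<mu>^2" using g mu by (simp add: one_le_power)
  finally have "5/2 \<le> 4*g*\<mu>^2 + ell g" by simp
  then have "5/2/(4*\<mu>) \<le> (4*g*\<mu>^2 + ell g)/(4*\<mu>)" using mu by (intro divide_right_mono) auto
  then show ?thesis using mu by (simp add: field_simps power2_eq_square)
qed

lemma amgm4: assumes "0 \<le> a" "0 \<le> b" shows "sqrt (a*b) \<le> a + b/4"
proof -
  have "0 \<le> (sqrt a - sqrt b/2)^2" by simp
  then have "sqrt a * sqrt b \<le> a + b/4" using assms by (simp add: power2_eq_square algebra_simps)
  then show ?thesis by (simp add: real_sqrt_mult)
qed

lemma P3:
  assumes u: "0 < u" "u \<le> 1" and d: "0 \<le> d" and Z: "Z \<le> 1" "Z \<le> u/2 + sqrt (d*u/3)"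
  shows "Z \<le> 5*u/8 + d/(1+d)"
proof (cases "d \<le> 1/2")
  case True
  have "sqrt (d*u/3) = sqrt ((d/(1+d)) * ((1+d)*u/3))" using d by (simp add: field_simps)
  also have "\<dots> \<le> d/(1+d) + (1+d)*u/3/4" using d u by (intro amgm4) auto
  also have "(1+d)*u/3/4 \<le> u/8" using True u by (simp add: field_simps)
  finally show ?thesis using Z by simp
next
  case False
  show ?thesis
  proof (cases "1 \<le> 5*u/8 + d/(1+d)")
    case True then show ?thesis using Z by simp
  next
    case False2: False
    have e: "0 < 1+d" using d by simp
    have "1 - d/(1+d) = 1/(1+d)" using e by (simp add: field_simps)
    then have "5*u/8 < 1/(1+d)" using False2 by simp
    then have ue: "u*(1+d) \<le> 8/5" using e by (simp add: field_simps)
    have key: "u*(1+d)*(4*(1+d)-3) \<le> 12*d"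
    proof -
      have "u*(1+d)*(4*(1+d)-3) \<le> 8/5*(4*(1+d)-3)" using ue d by (intro mult_right_mono) auto
      also have "\<dots> \<le> 12*d" using False by simp
      finally show ?thesis .
    qed
    have "d*u/3 \<le> u*(d/(1+d))/4 + (d/(1+d))^2"
    proof -
      have "d*u/3 - (u*(d/(1+d))/4 + (d/(1+d))^2) = d*(u*(1+d)*(4*(1+d)-3) - 12*d)/(12*(1+d)^2)"
      proof -
        define e where "e = 1 + d"
        have de: "d = e - 1" unfolding e_def by simp
        have "e \<noteq> 0" using e unfolding e_def by simp
        then show ?thesis unfolding e_def[symmetric] de by (simp add: field_simps power2_eq_square)
      qed
      also have "\<dots> \<le> 0" using key d e by (intro divide_nonpos_pos mult_nonneg_nonpos) auto
      finally show ?thesis by simp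
    qed
    also have "\<dots> \<le> (u/8 + d/(1+d))^2"
    proof -
      have gen: "\<And>D::real. (u/8 + D)^2 = u*D/4 + D^2 + (u/8)^2" by (simp add: power2_eq_square algebra_simps)
      show ?thesis unfolding gen[of "d/(1+d)"] by simp
    qed
    finally have "sqrt (d*u/3) \<le> u/8 + d/(1+d)" using u d e by (intro real_le_lsqrt) auto
    then show ?thesis using Z by simp
  qed
qed

lemma R:
  fixes g \<mu> d H H2 Z :: real
  assumes g: "0 < g" and mu: "0 < \<mu>" and d: "0 \<le> d" and H0: "0 \<le> H" and H1: "H \<le> F1 \<mu> 1"
    and H2: "H2 \<le> F2 \<mu> 1" and HH: "H^2 \<le> H2" and Z1: "Z \<le> 1" and Z2: "Z \<le> H + sqrt (d*(H2 - H^2))"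
  shows "Z \<le> g*\<mu> + ln (1+1/g)/(4*\<mu>) + d/(1+d)"
proof -
  have "ell g/(4*\<mu>) \<le> ln (1+1/g)/(4*\<mu>)" using ell_le_L[OF g] mu by (intro divide_right_mono) auto
  then have K: "g*\<mu> + ell g/(4*\<mu>) \<le> g*\<mu> + ln (1+1/g)/(4*\<mu>)" by simp
  have X0: "0 \<le> H2 - H^2" using HH by simp
  show ?thesis
  proof (cases "\<mu> \<le> 1")
    case True
    have I1: "F1 \<mu> 1 = 1 - \<mu>/2" and I2: "F2 \<mu> 1 = 1 - \<mu> + \<mu>^2/3"
      unfolding F1_def F2_def using True mu by (simp_all add: field_simps power2_eq_square power3_eq_cube)
    have p1: "1 - \<mu>/2 + \<mu>^2/24 \<le> g*\<mu> + ell g/(4*\<mu>)" using P1[OF g mu True] .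
    show ?thesis
    proof (cases "1 \<le> d")
      case True
      have "1/2 \<le> d/(1+d)" using True by (simp add: field_simps)
      moreover have "0 \<le> \<mu>^2/24" by simp
      ultimately show ?thesis using Z1 p1 K \<open>\<mu> \<le> 1\<close> by linarith
    next
      case False
      have "sqrt (d*(H2-H^2)) = sqrt ((d/(1+d)) * ((1+d)*(H2-H^2)))" using d by (simp add: field_simps)
      also have "\<dots> \<le> d/(1+d) + (1+d)*(H2-H^2)/4" using d X0 by (intro amgm4) auto
      also have "(1+d)*(H2-H^2)/4 \<le> (H2-H^2)/2"
      proof -
        have "(1+d)*(H2-H^2) \<le> 2*(H2-H^2)" using False X0 by (intro mult_right_mono) auto
        then show ?thesis by simp
      qed
      finally have s: "sqrt (d*(H2-H^2)) \<le> d/(1+d) + (H2-H^2)/2" by simp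
      have "H + (H2-H^2)/2 \<le> H + (F2 \<mu> 1 - H^2)/2" using H2 by simp
      also have "\<dots> \<le> F1 \<mu> 1 + (F2 \<mu> 1 - (F1 \<mu> 1)^2)/2"
      proof -
        have gen: "\<And>a b H::real. a + (b - a^2)/2 - (H + (b - H^2)/2) = (a - H)*(1 - (a+H)/2)"
          by (simp add: field_simps power2_eq_square)
        have "F1 \<mu> 1 + (F2 \<mu> 1 - (F1 \<mu> 1)^2)/2 - (H + (F2 \<mu> 1 - H^2)/2) = (F1 \<mu> 1 - H)*(1 - (F1 \<mu> 1 + H)/2)"
          by (rule gen)
        moreover have "0 \<le> (F1 \<mu> 1 - H)*(1 - (F1 \<mu> 1 + H)/2)"
          using H1 H0 I1 mu by (intro mult_nonneg_nonneg) auto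
        ultimately show ?thesis by simp
      qed
      also have "\<dots> = 1 - \<mu>/2 + \<mu>^2/24" unfolding I1 I2 by (simp add: field_simps power2_eq_square)
      finally show ?thesis using Z2 s p1 K by linarith
    qed
  next
    case False
    then have mu1: "1 \<le> \<mu>" by simp
    have I1: "F1 \<mu> 1 = 1/(2*\<mu>)" and I2: "F2 \<mu> 1 = 1/(3*\<mu>)"
      unfolding F1_def F2_def using False by simp_all
    define u where "u = 1/\<mu>"
    have u: "0 < u" "u \<le> 1" unfolding u_def using mu1 by auto
    have "sqrt (d*(H2-H^2)) \<le> sqrt (d*u/3)"
    proof -
      have "H2 - H^2 \<le> u/3" using H2 I2 H0 unfolding u_def by (simp add: field_simps) (smt (verit) zero_le_power2)
      then have "d*(H2-H^2) \<le> d*(u/3)" using d by (intro mult_left_mono) auto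
      then show ?thesis by simp
    qed
    moreover have "H \<le> u/2" using H1 I1 unfolding u_def by simp
    ultimately have "Z \<le> u/2 + sqrt (d*u/3)" using Z2 by linarith
    then have "Z \<le> 5*u/8 + d/(1+d)" using P3[OF u d Z1] by simp
    moreover have "5*u/8 = 5/(8*\<mu>)" unfolding u_def by simp
    ultimately show ?thesis using P2[OF g mu1] K by linarith
  qed
qed

lemma per_state:
  fixes q p m k :: "'a::finite \<Rightarrow> real" and g :: real
  assumes q0: "\<And>a. 0 < q a" and q1: "sum q UNIV = 1" and p0: "\<And>a. 0 < p a" and p1: "sum p UNIV = 1"
    and m0: "\<And>a. 0 \<le> m a" and m1: "sum m UNIV = 1" and g: "0 < g"
  shows "1 / (\<Sum>a\<in>UNIV. q a * q a / p a) \<le> (\<Sum>a\<in>UNIV. max 0 (q a - m a))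
           + sqrt ((g + (\<Sum>a\<in>UNIV. m a * (\<Sum>a'\<in>{a'. k a' \<le> k a}. p a'))) * ln ((1+g)/g))"
proof -
  define W where "W a = (\<Sum>a'\<in>{a'. k a' \<le> k a}. p a')" for a
  define L where "L = ln ((1+g)/g)"
  have L_eq: "L = ln (1 + 1/g)" using g unfolding L_def by (simp add: field_simps)
  have "1 < (1+g)/g" using g by simp
  then have Lpos: "0 < L" unfolding L_def by simp
  have W0: "0 \<le> W a" for a unfolding W_def using p0 by (intro sum_nonneg) (auto intro: less_imp_le)
  have W1: "W a \<le> 1" for a
  proof -
    have "W a \<le> sum p UNIV" unfolding W_def using p0 by (intro sum_mono2) (auto intro: less_imp_le)
    then show ?thesis using p1 by simp
  qed
  define aa where "aa = (\<Sum>a\<in>UNIV. m a * W a)"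
  have aa0: "0 \<le> aa" unfolding aa_def using m0 W0 by (intro sum_nonneg mult_nonneg_nonneg) auto
  define Y where "Y = (g + aa) * L"
  have Ypos: "0 < Y" unfolding Y_def using g aa0 Lpos by simp
  define \<mu> where "\<mu> = L / (2 * sqrt Y)"
  have mu: "0 < \<mu>" unfolding \<mu>_def using Lpos Ypos by simp
  define h where "h a = hf \<mu> (W a)" for a
  have h0: "0 \<le> h a" for a unfolding h_def hf_def by simp
  have h1: "h a \<le> 1" for a unfolding h_def hf_def using mu W0[of a] by simp
  define H1 where "H1 = (\<Sum>a\<in>UNIV. p a * h a)"
  define H2 where "H2 = (\<Sum>a\<in>UNIV. p a * (h a)^2)"
  have H1le: "H1 \<le> F1 \<mu> 1"
  proof -
    have "(\<Sum>a\<in>UNIV. p a * hf \<mu> (\<Sum>a'\<in>{a'\<in>UNIV. k a' \<le> k a}. p a')) \<le> F1 \<mu> (sum p UNIV) - F1 \<mu> 0"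
      using p0 p1 by (intro riemann F1_inc mu) (auto intro: less_imp_le)
    then show ?thesis unfolding H1_def h_def W_def p1 by (simp add: F1_def)
  qed
  have H2le: "H2 \<le> F2 \<mu> 1"
  proof -
    have "(\<Sum>a\<in>UNIV. p a * (\<lambda>x. (hf \<mu> x)^2) (\<Sum>a'\<in>{a'\<in>UNIV. k a' \<le> k a}. p a')) \<le> F2 \<mu> (sum p UNIV) - F2 \<mu> 0"
      using p0 p1 by (intro riemann F2_inc mu) (auto intro: less_imp_le)
    then show ?thesis unfolding H2_def h_def W_def p1 by (simp add: F2_def)
  qed
  have H10: "0 \<le> H1" unfolding H1_def using p0 h0 by (intro sum_nonneg mult_nonneg_nonneg) (auto intro: less_imp_le)
  define C where "C = (\<Sum>a\<in>UNIV. q a * q a / p a)"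
  define d where "d = C - 1"
  have d_eq: "d = (\<Sum>a\<in>UNIV. (q a - p a)^2 / p a)"
  proof -
    have "(\<Sum>a\<in>UNIV. (q a - p a)^2 / p a) = (\<Sum>a\<in>UNIV. q a * q a / p a - 2 * q a + p a)"
    proof (rule sum.cong[OF refl])
      fix a
      have "p a \<noteq> 0" using p0[of a] by simp
      then show "(q a - p a)^2 / p a = q a * q a / p a - 2 * q a + p a" by (simp add: field_simps power2_eq_square)
    qed
    also have "\<dots> = C - 2 * sum q UNIV + sum p UNIV" unfolding C_def by (simp add: sum.distrib sum_subtractf sum_distrib_left)
    finally show ?thesis unfolding d_def using q1 p1 by simp
  qed
  have d0: "0 \<le> d" unfolding d_eq using p0 by (intro sum_nonneg divide_nonneg_pos) auto
  have var_eq: "(\<Sum>a\<in>UNIV. p a * (h a - H1)^2) = H2 - H1^2"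
  proof -
    have "(\<Sum>a\<in>UNIV. p a * (h a - H1)^2) = (\<Sum>a\<in>UNIV. p a * (h a)^2 - 2 * H1 * (p a * h a) + H1^2 * p a)"
      by (rule sum.cong[OF refl]) (simp add: power2_eq_square algebra_simps)
    also have "\<dots> = H2 - 2 * H1 * H1 + H1^2 * sum p UNIV"
      unfolding H1_def H2_def by (simp add: sum.distrib sum_subtractf sum_distrib_left)
    finally show ?thesis using p1 by (simp add: power2_eq_square)
  qed
  have HH: "H1^2 \<le> H2"
  proof -
    have "0 \<le> (\<Sum>a\<in>UNIV. p a * (h a - H1)^2)" using p0 by (intro sum_nonneg mult_nonneg_nonneg) (auto intro: less_imp_le)
    then show ?thesis using var_eq by simp
  qed
  define Z where "Z = (\<Sum>a\<in>UNIV. q a * h a)"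
  have Z1: "Z \<le> 1"
  proof -
    have "Z \<le> sum q UNIV" unfolding Z_def using q0 h1 by (intro sum_mono) (simp add: mult_left_le less_imp_le)
    then show ?thesis using q1 by simp
  qed
  have Zsplit: "Z = H1 + (\<Sum>a\<in>UNIV. (q a - p a) * (h a - H1))"
  proof -
    have "(\<Sum>a\<in>UNIV. (q a - p a) * (h a - H1)) = (\<Sum>a\<in>UNIV. q a * h a - p a * h a - H1 * (q a - p a))"
      by (intro sum.cong[OF refl]) (simp add: algebra_simps)
    also have "\<dots> = (\<Sum>a\<in>UNIV. q a * h a) - (\<Sum>a\<in>UNIV. p a * h a) - H1 * (sum q UNIV - sum p UNIV)"
      by (simp add: sum_subtractf sum_distrib_left[symmetric])
    finally have "(\<Sum>a\<in>UNIV. (q a - p a) * (h a - H1)) = Z - H1 - H1 * (sum q UNIV - sum p UNIV)"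
      unfolding Z_def H1_def .
    then show ?thesis using q1 p1 by simp
  qed
  have CS: "(\<Sum>a\<in>UNIV. (q a - p a) * (h a - H1)) \<le> sqrt (d * (H2 - H1^2))"
  proof -
    have "(\<Sum>a\<in>UNIV. ((q a - p a)/sqrt (p a)) * (sqrt (p a) * (h a - H1)))^2
          \<le> (\<Sum>a\<in>UNIV. ((q a - p a)/sqrt (p a))^2) * (\<Sum>a\<in>UNIV. (sqrt (p a) * (h a - H1))^2)"
      by (rule Cauchy_Schwarz_ineq_sum)
    moreover have "(\<Sum>a\<in>UNIV. ((q a - p a)/sqrt (p a)) * (sqrt (p a) * (h a - H1))) = (\<Sum>a\<in>UNIV. (q a - p a) * (h a - H1))"
    proof (rule sum.cong[OF refl])
      fix a have "sqrt (p a) \<noteq> 0" using p0[of a] by simp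
      then show "((q a - p a)/sqrt (p a)) * (sqrt (p a) * (h a - H1)) = (q a - p a) * (h a - H1)" by simp
    qed
    moreover have "(\<Sum>a\<in>UNIV. ((q a - p a)/sqrt (p a))^2) = d"
      unfolding d_eq using p0 by (intro sum.cong[OF refl]) (simp add: power_divide less_imp_le)
    moreover have "(\<Sum>a\<in>UNIV. (sqrt (p a) * (h a - H1))^2) = H2 - H1^2"
      unfolding var_eq[symmetric] using p0 by (intro sum.cong[OF refl]) (simp add: power_mult_distrib less_imp_le)
    ultimately have "(\<Sum>a\<in>UNIV. (q a - p a) * (h a - H1))^2 \<le> d * (H2 - H1^2)" by simp
    then show ?thesis by (rule real_le_rsqrt)
  qed
  have Zle: "Z \<le> g*\<mu> + ln (1+1/g)/(4*\<mu>) + d/(1+d)"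
    using R[OF g mu d0 H10 H1le H2le HH Z1] Zsplit CS by simp
  have Cpos: "0 < C" using d0 unfolding d_def by simp
  have dC: "d/(1+d) = 1 - 1/C" unfolding d_def using Cpos by (simp add: field_simps)
  define v where "v a = min (q a) (m a)" for a
  have v_low: "(\<Sum>a\<in>UNIV. v a * (1 - \<mu> * W a)) \<le> Z"
    unfolding Z_def
  proof (rule sum_mono)
    fix a
    have v0: "0 \<le> v a" unfolding v_def using q0[of a] m0[of a] by simp
    have "v a * (1 - \<mu> * W a) \<le> v a * h a" unfolding h_def hf_def using v0 by (intro mult_left_mono) auto
    also have "\<dots> \<le> q a * h a" using h0[of a] unfolding v_def by (intro mult_right_mono) auto
    finally show "v a * (1 - \<mu> * W a) \<le> q a * h a" .
  qed
  have sumv: "(\<Sum>a\<in>UNIV. v a) = 1 - (\<Sum>a\<in>UNIV. max 0 (q a - m a))"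
  proof -
    have "(\<Sum>a\<in>UNIV. v a) = (\<Sum>a\<in>UNIV. q a - max 0 (q a - m a))"
      unfolding v_def by (intro sum.cong[OF refl]) (simp add: min_def max_def)
    then show ?thesis using q1 by (simp add: sum_subtractf)
  qed
  have vW: "(\<Sum>a\<in>UNIV. v a * W a) \<le> aa"
    unfolding aa_def v_def using W0 by (intro sum_mono mult_right_mono) auto
  have "(\<Sum>a\<in>UNIV. v a * (1 - \<mu> * W a)) = (\<Sum>a\<in>UNIV. v a) - \<mu> * (\<Sum>a\<in>UNIV. v a * W a)"
    by (simp add: algebra_simps sum_subtractf sum_distrib_left)
  then have "1 - (\<Sum>a\<in>UNIV. max 0 (q a - m a)) - \<mu> * aa \<le> Z"
    using v_low sumv vW mu by (smt (verit) mult_left_mono)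
  then have main: "1/C \<le> (\<Sum>a\<in>UNIV. max 0 (q a - m a)) + \<mu> * (g + aa) + L/(4*\<mu>)"
    using Zle dC L_eq by (simp add: algebra_simps)
  have sY: "0 < sqrt Y" using Ypos by simp
  have e1: "\<mu> * (g + aa) = sqrt Y / 2"
  proof -
    have "\<mu> * (g + aa) = Y / (2 * sqrt Y)" unfolding \<mu>_def Y_def using Lpos by (simp add: field_simps)
    also have "\<dots> = sqrt Y / 2" using sY Ypos by (simp add: field_simps real_sqrt_mult[symmetric])
    finally show ?thesis .
  qed
  have e2: "L/(4*\<mu>) = sqrt Y / 2" unfolding \<mu>_def using Lpos sY by (simp add: field_simps)
  have "1/C \<le> (\<Sum>a\<in>UNIV. max 0 (q a - m a)) + sqrt Y" using main e1 e2 by simp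
  then show ?thesis unfolding C_def Y_def aa_def W_def L_def .
qed




lemma ennreal_integral_le_nn:
  fixes f :: "'s \<Rightarrow> real"
  assumes f: "integrable M f"
  shows "ennreal (\<integral>x. f x \<partial>M) \<le> (\<integral>\<^sup>+x. ennreal (f x) \<partial>M)"
proof -
  have "(\<integral>x. f x \<partial>M) \<le> (\<integral>x. max 0 (f x) \<partial>M)"
    using f by (intro integral_mono) auto
  then have "ennreal (\<integral>x. f x \<partial>M) \<le> ennreal (\<integral>x. max 0 (f x) \<partial>M)" by (rule ennreal_leI)
  also have "ennreal (\<integral>x. max 0 (f x) \<partial>M) = (\<integral>\<^sup>+x. ennreal (max 0 (f x)) \<partial>M)"
    using f by (intro nn_integral_eq_integral[symmetric]) auto
  also have "\<dots> = (\<integral>\<^sup>+x. ennreal (f x) \<partial>M)"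
    by (intro nn_integral_cong) (simp add: max_def ennreal_neg)
  finally show ?thesis .
qed

lemma sq_integral_le:
  fixes f :: "'s \<Rightarrow> real"
  assumes M: "prob_space M" and f: "integrable M f" and f2: "integrable M (\<lambda>x. (f x)^2)"
  shows "(\<integral>x. f x \<partial>M)^2 \<le> (\<integral>x. (f x)^2 \<partial>M)"
proof -
  interpret prob_space M by (rule M)
  define c where "c = (\<integral>x. f x \<partial>M)"
  have "0 \<le> (\<integral>x. (f x - c)^2 \<partial>M)" by simp
  also have "(\<integral>x. (f x - c)^2 \<partial>M) = (\<integral>x. (f x)^2 - 2*c*f x + c^2 \<partial>M)"
    by (simp add: power2_eq_square algebra_simps)
  also have "\<dots> = (\<integral>x. (f x)^2 \<partial>M) - 2*c*c + c^2"
    using f f2 unfolding c_def by (simp add: prob_space)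
  finally show ?thesis unfolding c_def by (simp add: power2_eq_square)
qed

lemma integral_le_sqrt:
  fixes f :: "'s \<Rightarrow> real"
  assumes M: "prob_space M" and f: "integrable M f" and f2: "integrable M (\<lambda>x. (f x)^2)"
  shows "(\<integral>x. f x \<partial>M) \<le> sqrt (\<integral>x. (f x)^2 \<partial>M)"
  using sq_integral_le[OF assms] by (rule real_le_rsqrt)

lemma cov_pt:
  fixes q p :: "'a::finite \<Rightarrow> real"
  assumes q0: "\<And>a. 0 < q a" and p0: "\<And>a. 0 \<le> p a" and lam: "0 < l"
    and X: "(\<forall>a. 0 < p a) \<Longrightarrow> 1 / (\<Sum>a\<in>UNIV. q a * q a / p a) \<le> X"
  shows "ennreal (2*l - l^2 * X) \<le> (\<Sum>a\<in>UNIV. ennreal (q a) * (ennreal (q a) / ennreal (p a)))"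
proof (cases "\<forall>a. 0 < p a")
  case False
  then obtain a where "\<not> 0 < p a" by auto
  then have a: "p a = 0" using p0[of a] by simp
  have "ennreal (q a) * (ennreal (q a) / ennreal (p a)) = top"
    using a q0[of a] by (simp add: ennreal_divide_zero ennreal_mult_top)
  then have "top \<le> (\<Sum>a\<in>UNIV. ennreal (q a) * (ennreal (q a) / ennreal (p a)))"
    by (metis (no_types, lifting) UNIV_I finite_class.finite_UNIV member_le_sum zero_le)
  then show ?thesis by (rule order_trans[OF top_greatest])
next
  case True
  define C where "C = (\<Sum>a\<in>UNIV. q a * q a / p a)"
  have Cpos: "0 < C" unfolding C_def using q0 True
    by (intro sum_pos) (auto intro: divide_pos_pos mult_pos_pos)
  have eq: "(\<Sum>a\<in>UNIV. ennreal (q a) * (ennreal (q a) / ennreal (p a))) = ennreal C"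
  proof -
    have "(\<Sum>a\<in>UNIV. ennreal (q a) * (ennreal (q a) / ennreal (p a))) = (\<Sum>a\<in>UNIV. ennreal (q a * q a / p a))"
      using q0 True by (intro sum.cong[OF refl]) (simp add: divide_ennreal ennreal_mult[symmetric] less_imp_le)
    also have "\<dots> = ennreal C" unfolding C_def using q0 True
      by (intro sum_ennreal) (auto intro: less_imp_le)
    finally show ?thesis .
  qed
  have "1/C \<le> X" using X True unfolding C_def by simp
  then have "l^2 * (1/C) \<le> l^2 * X" by (intro mult_left_mono) auto
  then have "l^2/C \<le> l^2 * X" by simp
  moreover have "2*l - l^2/C \<le> C"
  proof -
    have "0 \<le> (C - l)^2/C" using Cpos by simp
    also have "(C - l)^2/C = C - 2*l + l^2/C" using Cpos by (simp add: field_simps power2_eq_square)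
    finally show ?thesis by simp
  qed
  ultimately have "2*l - l^2 * X \<le> C" by simp
  then show ?thesis unfolding eq by (rule ennreal_leI)
qed

lemma main_gen:
  fixes M :: "'s measure" and piref \<pi> pb r k :: "'s \<Rightarrow> 'a::finite \<Rightarrow> real" and \<beta> \<gamma> Pr :: real
  assumes M: "prob_space M"
    and ref_pol: "is_policy piref" and ref_meas: "measurable_policy M piref"
    and ref_full: "\<And>s a. 0 < piref s a" and beta: "0 < \<beta>"
    and r_bdd: "\<exists>B. \<forall>s a. \<bar>r s a\<bar> \<le> B" and r_meas: "\<And>a. (\<lambda>s. r s a) \<in> borel_measurable M"
    and pi_pol: "is_policy \<pi>" and pi_meas: "measurable_policy M \<pi>"
    and pb_pol: "is_policy pb" and pb_meas: "measurable_policy M pb" and pb_int: "integrable M (Jint r piref \<beta> pb)"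
    and g: "0 < \<gamma>"
    and k_meas: "\<And>a. (\<lambda>s. k s a) \<in> borel_measurable M"
    and Pr: "(\<integral>s. (\<Sum>a\<in>UNIV. pb s a * (\<Sum>a'\<in>UNIV. if k s a' \<le> k s a then \<pi> s a' else 0)) \<partial>M) \<le> 2 * Pr"
  shows "Cov M (pistar piref r \<beta>) \<pi> \<ge> ennreal (1 / (sqrt ((\<gamma> + 2 * Pr) * ln ((1 + \<gamma>) / \<gamma>))
              + sqrt ((J M r piref \<beta> (pistar piref r \<beta>) - J M r piref \<beta> pb) / (2 * \<beta>))))"
proof -
  interpret prob_space M by (rule M)
  define q where "q = pistar piref r \<beta>"
  obtain B where B: "\<And>s a. \<bar>r s a\<bar> \<le> B" using r_bdd by auto
  have [measurable]: "(\<lambda>s. piref s a) \<in> borel_measurable M" for a using ref_meas unfolding measurable_policy_def by auto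
  have [measurable]: "(\<lambda>s. \<pi> s a) \<in> borel_measurable M" for a using pi_meas unfolding measurable_policy_def by auto
  have [measurable]: "(\<lambda>s. pb s a) \<in> borel_measurable M" for a using pb_meas unfolding measurable_policy_def by auto
  have [measurable]: "(\<lambda>s. r s a) \<in> borel_measurable M" for a using r_meas by auto
  have [measurable]: "(\<lambda>s. k s a) \<in> borel_measurable M" for a using k_meas by auto
  have ref0: "\<And>s a. 0 \<le> piref s a" using ref_full by (auto intro: less_imp_le)
  have ref1: "\<And>s. sum (piref s) UNIV = 1" using ref_pol unfolding is_policy_def by auto
  have pi0: "\<And>s a. 0 \<le> \<pi> s a" and pi1: "\<And>s. sum (\<pi> s) UNIV = 1" using pi_pol unfolding is_policy_def by auto
  have pb0: "\<And>s a. 0 \<le> pb s a" and pb1: "\<And>s. sum (pb s) UNIV = 1" using pb_pol unfolding is_policy_def by auto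
  define Zs where "Zs s = (\<Sum>b\<in>UNIV. piref s b * exp (r s b / \<beta>))" for s
  have Zs_meas[measurable]: "Zs \<in> borel_measurable M" unfolding Zs_def by measurable
  have Zpos: "0 < Zs s" for s unfolding Zs_def using ref_full by (intro sum_pos) auto
  have q_eq: "q s a = piref s a * exp (r s a / \<beta>) / Zs s" for s a unfolding q_def pistar_def Zs_def by simp
  have q_meas[measurable]: "(\<lambda>s. q s a) \<in> borel_measurable M" for a unfolding q_eq by measurable
  have q0: "0 < q s a" for s a unfolding q_eq using ref_full Zpos by simp
  have q1: "sum (q s) UNIV = 1" for s
  proof -
    have "sum (q s) UNIV = (\<Sum>a\<in>UNIV. piref s a * exp (r s a / \<beta>)) / Zs s" unfolding q_eq by (simp add: sum_divide_distrib)
    then show ?thesis using Zpos[of s] unfolding Zs_def by simp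
  qed
  have lnq: "ln (q s a / piref s a) = r s a / \<beta> - ln (Zs s)" for s a
  proof -
    have "q s a / piref s a = exp (r s a / \<beta>) / Zs s" unfolding q_eq using ref_full[of s a] by simp
    then show ?thesis using Zpos[of s] by (simp add: ln_div)
  qed
  have Zbd: "\<bar>ln (Zs s)\<bar> \<le> B / \<beta>" for s
  proof -
    have lo: "exp (- B / \<beta>) \<le> Zs s"
    proof -
      have "(\<Sum>b\<in>UNIV. piref s b * exp (- B / \<beta>)) \<le> Zs s" unfolding Zs_def
      proof (rule sum_mono)
        fix b have "-B \<le> r s b" using B[of s b] by (simp add: abs_le_iff)
        then have "- B / \<beta> \<le> r s b / \<beta>" using beta by (intro divide_right_mono) auto
        then show "piref s b * exp (- B / \<beta>) \<le> piref s b * exp (r s b / \<beta>)" using ref0[of s b] by (intro mult_left_mono) auto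
      qed
      then show ?thesis using ref1[of s] by (simp add: sum_distrib_right[symmetric])
    qed
    have hi: "Zs s \<le> exp (B / \<beta>)"
    proof -
      have "Zs s \<le> (\<Sum>b\<in>UNIV. piref s b * exp (B / \<beta>))" unfolding Zs_def
      proof (rule sum_mono)
        fix b have "r s b \<le> B" using B[of s b] by (simp add: abs_le_iff)
        then have "r s b / \<beta> \<le> B / \<beta>" using beta by (intro divide_right_mono) auto
        then show "piref s b * exp (r s b / \<beta>) \<le> piref s b * exp (B / \<beta>)" using ref0[of s b] by (intro mult_left_mono) auto
      qed
      then show ?thesis using ref1[of s] by (simp add: sum_distrib_right[symmetric])
    qed
    have "- B / \<beta> \<le> ln (Zs s)" using lo Zpos[of s] by (simp add: ln_ge_iff)
    moreover have "ln (Zs s) \<le> ln (exp (B / \<beta>))" using hi Zpos[of s] by (subst ln_le_cancel_iff) auto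
    then have "ln (Zs s) \<le> B / \<beta>" by simp
    ultimately show ?thesis by (simp add: abs_le_iff)
  qed
  define KL' where "KL' m s = (\<Sum>a\<in>UNIV. m s a * ln (m s a / q s a))" for m :: "'s \<Rightarrow> 'a \<Rightarrow> real" and s
  have ID: "Jint r piref \<beta> m s = \<beta> * ln (Zs s) - \<beta> * KL' m s"
    if m0: "\<And>a. 0 \<le> m s a" and m1: "sum (m s) UNIV = 1" for m s
  proof -
    have "(\<Sum>a\<in>UNIV. m s a * ln (m s a / piref s a)) = (\<Sum>a\<in>UNIV. m s a * ln (m s a / q s a) + (m s a * r s a / \<beta> - m s a * ln (Zs s)))"
    proof (rule sum.cong[OF refl])
      fix a
      show "m s a * ln (m s a / piref s a) = m s a * ln (m s a / q s a) + (m s a * r s a / \<beta> - m s a * ln (Zs s))"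
      proof (cases "m s a = 0")
        case True then show ?thesis by simp
      next
        case False
        then have mp: "0 < m s a" using m0[of a] by simp
        have "ln (m s a / piref s a) = ln (m s a / q s a) + ln (q s a / piref s a)"
          using mp q0[of s a] ref_full[of s a] by (simp add: ln_div)
        then have "m s a * ln (m s a / piref s a) = m s a * (ln (m s a / q s a) + (r s a / \<beta> - ln (Zs s)))"
          unfolding lnq by simp
        then show ?thesis by (simp add: algebra_simps)
      qed
    qed
    also have "\<dots> = KL' m s + (\<Sum>a\<in>UNIV. m s a * r s a) / \<beta> - ln (Zs s)"
      unfolding KL'_def using m1 by (simp add: sum.distrib sum_subtractf sum_divide_distrib[symmetric] sum_distrib_right[symmetric])
    finally have "KL m piref s = KL' m s + (\<Sum>a\<in>UNIV. m s a * r s a) / \<beta> - ln (Zs s)" unfolding KL_def .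
    then have "\<beta> * KL m piref s = \<beta> * KL' m s + \<beta> * ((\<Sum>a\<in>UNIV. m s a * r s a) / \<beta>) - \<beta> * ln (Zs s)"
      by (simp only: ring_distribs)
    also have "\<beta> * ((\<Sum>a\<in>UNIV. m s a * r s a) / \<beta>) = (\<Sum>a\<in>UNIV. m s a * r s a)" using beta by simp
    finally have "\<beta> * KL m piref s = \<beta> * KL' m s + (\<Sum>a\<in>UNIV. m s a * r s a) - \<beta> * ln (Zs s)" .
    then show ?thesis unfolding Jint_def by (simp add: algebra_simps)
  qed
  have KLqq: "KL' q s = 0" for s
  proof -
    have "\<And>a. q s a \<noteq> 0" using q0 by (metis less_irrefl)
    then show ?thesis unfolding KL'_def by simp
  qed
  have Jq: "Jint r piref \<beta> q s = \<beta> * ln (Zs s)" for s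
    using ID[of q s] q0 q1 KLqq by (simp add: less_imp_le)
  have Jpb: "Jint r piref \<beta> pb s = \<beta> * ln (Zs s) - \<beta> * KL' pb s" for s
    using ID[of pb s] pb0 pb1 by simp
  have Jq_int: "integrable M (Jint r piref \<beta> q)"
  proof -
    have "integrable M (\<lambda>s. \<beta> * ln (Zs s))"
    proof (rule integrable_const_bound[where B="\<beta> * (B/\<beta>)"])
      have "norm (\<beta> * ln (Zs s)) \<le> \<beta> * (B/\<beta>)" for s
        using mult_left_mono[OF Zbd[of s], of \<beta>] beta by (simp add: abs_mult)
      then show "AE s in M. norm (\<beta> * ln (Zs s)) \<le> \<beta> * (B/\<beta>)" by simp
    qed measurable
    moreover have "Jint r piref \<beta> q = (\<lambda>s. \<beta> * ln (Zs s))" using Jq by auto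
    ultimately show ?thesis by simp
  qed
  have KL_eq: "KL' pb = (\<lambda>s. (Jint r piref \<beta> q s - Jint r piref \<beta> pb s) / \<beta>)"
    using Jq Jpb beta by (auto simp: field_simps)
  have KL_int: "integrable M (KL' pb)" unfolding KL_eq using Jq_int pb_int by auto
  have Jdiff: "(J M r piref \<beta> q - J M r piref \<beta> pb) / (2 * \<beta>) = (\<integral>s. KL' pb s \<partial>M) / 2"
  proof -
    have "(\<integral>s. KL' pb s \<partial>M) = (\<integral>s. Jint r piref \<beta> q s - Jint r piref \<beta> pb s \<partial>M) / \<beta>"
      unfolding KL_eq by simp
    also have "\<dots> = (J M r piref \<beta> q - J M r piref \<beta> pb) / \<beta>"
      unfolding J_def using Jq_int pb_int by simp
    finally show ?thesis using beta by (simp add: field_simps)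
  qed
  define T where "T s = (\<Sum>a\<in>UNIV. max 0 (q s a - pb s a))" for s
  define W where "W s a = (\<Sum>a'\<in>UNIV. if k s a' \<le> k s a then \<pi> s a' else 0)" for s a
  define Aw where "Aw s = (\<Sum>a\<in>UNIV. pb s a * W s a)" for s
  define L where "L = ln ((1 + \<gamma>) / \<gamma>)"
  define Y where "Y s = (\<gamma> + Aw s) * L" for s
  define A where "A s = sqrt (Y s)" for s
  have "1 < (1+\<gamma>)/\<gamma>" using g by simp
  then have Lpos: "0 < L" unfolding L_def by simp
  have T_meas[measurable]: "T \<in> borel_measurable M" unfolding T_def by measurable
  have W_meas[measurable]: "(\<lambda>s. W s a) \<in> borel_measurable M" for a unfolding W_def by measurable
  have Aw_meas[measurable]: "Aw \<in> borel_measurable M" unfolding Aw_def by measurable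
  have Y_meas[measurable]: "Y \<in> borel_measurable M" unfolding Y_def by measurable
  have A_meas[measurable]: "A \<in> borel_measurable M" unfolding A_def by measurable
  have T0: "0 \<le> T s" for s unfolding T_def by (intro sum_nonneg) auto
  have T1: "T s \<le> 1" for s
  proof -
    have "T s \<le> sum (q s) UNIV" unfolding T_def using pb0 q0 by (intro sum_mono) (auto intro: less_imp_le)
    then show ?thesis using q1 by simp
  qed
  have W0: "0 \<le> W s a" for s a unfolding W_def using pi0 by (intro sum_nonneg) auto
  have W1: "W s a \<le> 1" for s a
  proof -
    have "W s a \<le> sum (\<pi> s) UNIV" unfolding W_def using pi0 by (intro sum_mono) auto
    then show ?thesis using pi1 by simp
  qed
  have Aw0: "0 \<le> Aw s" for s unfolding Aw_def using pb0 W0 by (intro sum_nonneg mult_nonneg_nonneg) auto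
  have Aw1: "Aw s \<le> 1" for s
  proof -
    have "Aw s \<le> sum (pb s) UNIV" unfolding Aw_def using pb0 W1 by (intro sum_mono) (simp add: mult_left_le)
    then show ?thesis using pb1 by simp
  qed
  have Y0: "0 \<le> Y s" for s unfolding Y_def using g Aw0 Lpos by simp
  have Y1: "Y s \<le> (\<gamma> + 1) * L" for s unfolding Y_def using Aw1 Lpos by (intro mult_right_mono) auto
  have A0: "0 \<le> A s" for s unfolding A_def using Y0[of s] by simp
  have A1: "A s \<le> sqrt ((\<gamma> + 1) * L)" for s unfolding A_def using Y1 by simp
  have T_int: "integrable M T" by (rule integrable_const_bound[where B=1]) (use T0 T1 in auto)
  have T2_int: "integrable M (\<lambda>s. (T s)^2)"
    by (rule integrable_const_bound[where B=1]) (use T0 T1 in \<open>auto simp: abs_le_iff power_le_one\<close>)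
  have A_int: "integrable M A" by (rule integrable_const_bound[where B="sqrt ((\<gamma> + 1) * L)"]) (use A0 A1 in auto)
  have A2: "(A s)^2 = Y s" for s unfolding A_def using Y0 by simp
  have Aw_int: "integrable M Aw" by (rule integrable_const_bound[where B=1]) (use Aw0 Aw1 in auto)
  have Y_int: "integrable M Y" unfolding Y_def using Aw_int by simp
  have A2_int: "integrable M (\<lambda>s. (A s)^2)" unfolding A2 using Y_int by simp
  have per: "1 / (\<Sum>a\<in>UNIV. q s a * q s a / \<pi> s a) \<le> T s + A s" if pos: "\<forall>a. 0 < \<pi> s a" for s
  proof -
    have Weq: "(\<Sum>a'\<in>{a'. k s a' \<le> k s a}. \<pi> s a') = W s a" for a
      unfolding W_def by (simp add: sum.If_cases)
    have "1 / (\<Sum>a\<in>UNIV. q s a * q s a / \<pi> s a) \<le> (\<Sum>a\<in>UNIV. max 0 (q s a - pb s a))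
           + sqrt ((\<gamma> + (\<Sum>a\<in>UNIV. pb s a * (\<Sum>a'\<in>{a'. k s a' \<le> k s a}. \<pi> s a'))) * ln ((1+\<gamma>)/\<gamma>))"
      using q0 q1 pos pi1 pb0 pb1 g by (intro per_state) auto
    then show ?thesis unfolding Weq T_def A_def Y_def Aw_def L_def .
  qed
  have pins: "2 * (T s)^2 \<le> KL' pb s" for s
    unfolding T_def KL'_def using pb0 pb1 q0 q1 by (intro pinsker) auto
  define Den where "Den = sqrt ((\<gamma> + 2 * Pr) * L) + sqrt ((J M r piref \<beta> q - J M r piref \<beta> pb) / (2 * \<beta>))"
  have intT: "(\<integral>s. T s \<partial>M) \<le> sqrt ((J M r piref \<beta> q - J M r piref \<beta> pb) / (2 * \<beta>))"
  proof -
    have "(\<integral>s. T s \<partial>M) \<le> sqrt (\<integral>s. (T s)^2 \<partial>M)" by (rule integral_le_sqrt[OF M T_int T2_int])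
    also have "(\<integral>s. (T s)^2 \<partial>M) \<le> (\<integral>s. KL' pb s / 2 \<partial>M)"
      using pins T2_int KL_int by (intro integral_mono) (auto simp: mult.commute)
    also have "(\<integral>s. KL' pb s / 2 \<partial>M) = (\<integral>s. KL' pb s \<partial>M) / 2" by simp
    finally show ?thesis unfolding Jdiff by simp
  qed
  have intA: "(\<integral>s. A s \<partial>M) \<le> sqrt ((\<gamma> + 2 * Pr) * L)"
  proof -
    have "(\<integral>s. A s \<partial>M) \<le> sqrt (\<integral>s. (A s)^2 \<partial>M)" by (rule integral_le_sqrt[OF M A_int A2_int])
    also have "(\<integral>s. (A s)^2 \<partial>M) = (\<gamma> + (\<integral>s. Aw s \<partial>M)) * L"
      unfolding A2 Y_def using Aw_int by (simp add: prob_space algebra_simps)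
    also have "\<dots> \<le> (\<gamma> + 2 * Pr) * L" using Pr Lpos unfolding Aw_def W_def by (intro mult_right_mono) auto
    finally show ?thesis by simp
  qed
  have cov_eq: "Cov M q \<pi> = (\<integral>\<^sup>+ s. (\<Sum>a\<in>UNIV. ennreal (q s a) * (ennreal (q s a) / ennreal (\<pi> s a))) \<partial>M)"
    unfolding Cov_def ..
  show ?thesis
  proof (cases "0 < Den")
    case False
    then have "1 / Den \<le> 0" by simp
    then have "ennreal (1 / Den) = 0" using ennreal_eq_0_iff by blast
    then show ?thesis unfolding Den_def L_def q_def by simp
  next
    case True
    define l where "l = 1 / Den"
    have l: "0 < l" unfolding l_def using True by simp
    have f_int: "integrable M (\<lambda>s. 2*l - l^2 * (A s + T s))" using A_int T_int by simp
    have "ennreal l \<le> ennreal (\<integral>s. 2*l - l^2 * (A s + T s) \<partial>M)"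
    proof (rule ennreal_leI)
      have "(\<integral>s. 2*l - l^2 * (A s + T s) \<partial>M) = 2*l - l^2 * ((\<integral>s. A s \<partial>M) + (\<integral>s. T s \<partial>M))"
        using A_int T_int by (simp add: prob_space)
      moreover have "(\<integral>s. A s \<partial>M) + (\<integral>s. T s \<partial>M) \<le> Den" unfolding Den_def using intA intT by simp
      moreover have "2*l - l^2 * Den = l" unfolding l_def using True by (simp add: field_simps power2_eq_square)
      ultimately show "l \<le> (\<integral>s. 2*l - l^2 * (A s + T s) \<partial>M)"
        using l by (smt (verit) mult_left_mono zero_le_power2)
    qed
    also have "\<dots> \<le> (\<integral>\<^sup>+ s. ennreal (2*l - l^2 * (A s + T s)) \<partial>M)" by (rule ennreal_integral_le_nn[OF f_int])
    also have "\<dots> \<le> Cov M q \<pi>" unfolding cov_eq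
    proof (rule nn_integral_mono)
      fix s
      show "ennreal (2*l - l^2 * (A s + T s)) \<le> (\<Sum>a\<in>UNIV. ennreal (q s a) * (ennreal (q s a) / ennreal (\<pi> s a)))"
        using q0 pi0 l per[of s] by (intro cov_pt) (auto simp: add.commute)
    qed
    finally show ?thesis unfolding l_def Den_def L_def q_def by simp
  qed
qed




theorem lemmaG3:
  fixes M :: "'s measure"
    and piref \<pi> :: "'s \<Rightarrow> 'a::finite \<Rightarrow> real"
    and r :: "'s \<Rightarrow> 'a \<Rightarrow> real"
    and P :: "'s \<Rightarrow> 'a \<Rightarrow> 'a \<Rightarrow> real"
    and \<beta> :: real
  assumes M: "prob_space M"
    and ref_pol: "is_policy piref" and ref_meas: "measurable_policy M piref"
    and ref_full: "\<And>s a. 0 < piref s a"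
    and beta: "0 < \<beta>"
    and r_bdd: "\<exists>B. \<forall>s a. \<bar>r s a\<bar> \<le> B"
    and r_meas: "\<And>a. (\<lambda>s. r s a) \<in> borel_measurable M"
    and P_range: "\<And>s a a'. 0 \<le> P s a a' \<and> P s a a' \<le> 1"
    and P_meas: "\<And>a a'. (\<lambda>s. P s a a') \<in> borel_measurable M"
    and P_half: "\<And>s a a'. r s a \<ge> r s a' \<Longrightarrow> P s a a' \<ge> 1/2"
    and pi_pol: "is_policy \<pi>" and pi_meas: "measurable_policy M \<pi>"
  shows "\<forall>\<gamma>::real. \<forall>pb :: 's \<Rightarrow> 'a \<Rightarrow> real.
           0 < \<gamma> \<and> is_policy pb \<and> measurable_policy M pb \<and> integrable M (Jint r piref \<beta> pb) \<longrightarrow>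
           Cov M (pistar piref r \<beta>) \<pi> \<ge>
             ennreal (1 / (sqrt ((\<gamma> + 2 * Pref M P pb \<pi>) * ln ((1 + \<gamma>) / \<gamma>))
                   + sqrt ((J M r piref \<beta> (pistar piref r \<beta>) - J M r piref \<beta> pb) / (2 * \<beta>))))
           \<and> Cov M (pistar piref r \<beta>) \<pi> \<ge>
             ennreal (1 / (sqrt ((\<gamma> + 2 * Pref M P \<pi> pb) * ln ((1 + \<gamma>) / \<gamma>))
                   + sqrt ((J M r piref \<beta> (pistar piref r \<beta>) - J M r piref \<beta> pb) / (2 * \<beta>))))"
proof (intro allI impI)
  fix \<gamma> :: real and pb :: "'s \<Rightarrow> 'a \<Rightarrow> real"
  assume H: "0 < \<gamma> \<and> is_policy pb \<and> measurable_policy M pb \<and> integrable M (Jint r piref \<beta> pb)"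
  then have g: "0 < \<gamma>" and pb_pol: "is_policy pb" and pb_meas: "measurable_policy M pb"
    and pb_int: "integrable M (Jint r piref \<beta> pb)" by auto
  interpret prob_space M by (rule M)
  have [measurable]: "(\<lambda>s. \<pi> s a) \<in> borel_measurable M" for a using pi_meas unfolding measurable_policy_def by auto
  have [measurable]: "(\<lambda>s. pb s a) \<in> borel_measurable M" for a using pb_meas unfolding measurable_policy_def by auto
  have [measurable]: "(\<lambda>s. r s a) \<in> borel_measurable M" for a using r_meas by auto
  have [measurable]: "(\<lambda>s. P s a a') \<in> borel_measurable M" for a a' using P_meas by auto
  have pi0: "\<And>s a. 0 \<le> \<pi> s a" and pi1: "\<And>s. sum (\<pi> s) UNIV = 1" using pi_pol unfolding is_policy_def by auto
  have pb0: "\<And>s a. 0 \<le> pb s a" and pb1: "\<And>s. sum (pb s) UNIV = 1" using pb_pol unfolding is_policy_def by auto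
  have bnd: "\<And>x y z :: real. 0 \<le> x \<Longrightarrow> x \<le> 1 \<Longrightarrow> 0 \<le> y \<Longrightarrow> y \<le> 1 \<Longrightarrow> 0 \<le> z \<Longrightarrow> z \<le> 1 \<Longrightarrow> \<bar>x*y*z\<bar> \<le> 1"
    by (simp add: abs_mult mult_le_one)
  have pi_le1: "\<pi> s a \<le> 1" for s a using pi0 pi1 by (metis UNIV_I finite_class.finite_UNIV member_le_sum)
  have pb_le1: "pb s a \<le> 1" for s a using pb0 pb1 by (metis UNIV_I finite_class.finite_UNIV member_le_sum)
  have int_lemma: "integrable M (\<lambda>s. (\<Sum>a\<in>UNIV. \<Sum>a'\<in>UNIV. f s a a'))"
    if "\<And>a a'. (\<lambda>s. f s a a') \<in> borel_measurable M" "\<And>s a a'. \<bar>f s a a'\<bar> \<le> 1" for f :: "'s \<Rightarrow> 'a \<Rightarrow> 'a \<Rightarrow> real"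
  proof -
    have "integrable M (\<lambda>s. f s a a')" for a a'
      by (rule integrable_const_bound[where B=1]) (use that in auto)
    then show ?thesis by auto
  qed
  have conj1: "(\<integral>s. (\<Sum>a\<in>UNIV. pb s a * (\<Sum>a'\<in>UNIV. if r s a' \<le> r s a then \<pi> s a' else 0)) \<partial>M) \<le> 2 * Pref M P pb \<pi>"
  proof -
    have "(\<integral>s. (\<Sum>a\<in>UNIV. pb s a * (\<Sum>a'\<in>UNIV. if r s a' \<le> r s a then \<pi> s a' else 0)) \<partial>M)
        = (\<integral>s. (\<Sum>a\<in>UNIV. \<Sum>a'\<in>UNIV. pb s a * (if r s a' \<le> r s a then \<pi> s a' else 0)) \<partial>M)"
      by (simp add: sum_distrib_left)
    also have "\<dots> \<le> (\<integral>s. (\<Sum>a\<in>UNIV. \<Sum>a'\<in>UNIV. 2 * (pb s a * \<pi> s a' * P s a a')) \<partial>M)"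
    proof (rule integral_mono)
      show "integrable M (\<lambda>s. \<Sum>a\<in>UNIV. \<Sum>a'\<in>UNIV. pb s a * (if r s a' \<le> r s a then \<pi> s a' else 0))"
        by (rule int_lemma) (use pb0 pi0 pb_le1 pi_le1 in \<open>auto simp: abs_mult mult_le_one\<close>)
      show "integrable M (\<lambda>s. \<Sum>a\<in>UNIV. \<Sum>a'\<in>UNIV. 2 * (pb s a * \<pi> s a' * P s a a'))"
        using int_lemma[of "\<lambda>s a a'. pb s a * \<pi> s a' * P s a a'"] pb0 pi0 pb_le1 pi_le1 P_range bnd
        by (simp add: sum_distrib_left[symmetric])
      fix s
      show "(\<Sum>a\<in>UNIV. \<Sum>a'\<in>UNIV. pb s a * (if r s a' \<le> r s a then \<pi> s a' else 0))
          \<le> (\<Sum>a\<in>UNIV. \<Sum>a'\<in>UNIV. 2 * (pb s a * \<pi> s a' * P s a a'))"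
      proof (intro sum_mono)
        fix a a'
        have pp: "0 \<le> pb s a * \<pi> s a'" using pb0 pi0 by simp
        show "pb s a * (if r s a' \<le> r s a then \<pi> s a' else 0) \<le> 2 * (pb s a * \<pi> s a' * P s a a')"
        proof (cases "r s a' \<le> r s a")
          case True
          then have "1 \<le> 2 * P s a a'" using P_half[of s a' a] by simp
          then have "pb s a * \<pi> s a' * 1 \<le> pb s a * \<pi> s a' * (2 * P s a a')" using pp by (intro mult_left_mono) auto
          then show ?thesis using True by (simp add: algebra_simps)
        next
          case False
          then show ?thesis using pp P_range[of s a a'] by simp
        qed
      qed
    qed
    also have "\<dots> = 2 * Pref M P pb \<pi>" unfolding Pref_def by (simp add: sum_distrib_left[symmetric])
    finally show ?thesis .
  qed
  have conj2: "(\<integral>s. (\<Sum>a\<in>UNIV. pb s a * (\<Sum>a'\<in>UNIV. if - r s a' \<le> - r s a then \<pi> s a' else 0)) \<partial>M) \<le> 2 * Pref M P \<pi> pb"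
  proof -
    have "(\<integral>s. (\<Sum>a\<in>UNIV. pb s a * (\<Sum>a'\<in>UNIV. if - r s a' \<le> - r s a then \<pi> s a' else 0)) \<partial>M)
        = (\<integral>s. (\<Sum>a\<in>UNIV. \<Sum>a'\<in>UNIV. pb s a * (if r s a \<le> r s a' then \<pi> s a' else 0)) \<partial>M)"
      by (simp add: sum_distrib_left)
    also have "\<dots> \<le> (\<integral>s. (\<Sum>a\<in>UNIV. \<Sum>a'\<in>UNIV. 2 * (\<pi> s a' * pb s a * P s a' a)) \<partial>M)"
    proof (rule integral_mono)
      show "integrable M (\<lambda>s. \<Sum>a\<in>UNIV. \<Sum>a'\<in>UNIV. pb s a * (if r s a \<le> r s a' then \<pi> s a' else 0))"
        by (rule int_lemma) (use pb0 pi0 pb_le1 pi_le1 in \<open>auto simp: abs_mult mult_le_one\<close>)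
      show "integrable M (\<lambda>s. \<Sum>a\<in>UNIV. \<Sum>a'\<in>UNIV. 2 * (\<pi> s a' * pb s a * P s a' a))"
        using int_lemma[of "\<lambda>s a a'. \<pi> s a' * pb s a * P s a' a"] pb0 pi0 pb_le1 pi_le1 P_range bnd
        by (simp add: sum_distrib_left[symmetric])
      fix s
      show "(\<Sum>a\<in>UNIV. \<Sum>a'\<in>UNIV. pb s a * (if r s a \<le> r s a' then \<pi> s a' else 0))
          \<le> (\<Sum>a\<in>UNIV. \<Sum>a'\<in>UNIV. 2 * (\<pi> s a' * pb s a * P s a' a))"
      proof (intro sum_mono)
        fix a a'
        have pp: "0 \<le> \<pi> s a' * pb s a" using pb0 pi0 by simp
        show "pb s a * (if r s a \<le> r s a' then \<pi> s a' else 0) \<le> 2 * (\<pi> s a' * pb s a * P s a' a)"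
        proof (cases "r s a \<le> r s a'")
          case True
          then have "1 \<le> 2 * P s a' a" using P_half[of s a a'] by simp
          then have "\<pi> s a' * pb s a * 1 \<le> \<pi> s a' * pb s a * (2 * P s a' a)" using pp by (intro mult_left_mono) auto
          then show ?thesis using True by (simp add: algebra_simps)
        next
          case False
          then show ?thesis using pp P_range[of s a' a] by simp
        qed
      qed
    qed
    also have "\<dots> = 2 * Pref M P \<pi> pb" unfolding Pref_def
      by (simp add: sum_distrib_left[symmetric]) (subst sum.swap, simp)
    finally show ?thesis .
  qed
  show "Cov M (pistar piref r \<beta>) \<pi> \<ge>
             ennreal (1 / (sqrt ((\<gamma> + 2 * Pref M P pb \<pi>) * ln ((1 + \<gamma>) / \<gamma>))
                   + sqrt ((J M r piref \<beta> (pistar piref r \<beta>) - J M r piref \<beta> pb) / (2 * \<beta>))))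
           \<and> Cov M (pistar piref r \<beta>) \<pi> \<ge>
             ennreal (1 / (sqrt ((\<gamma> + 2 * Pref M P \<pi> pb) * ln ((1 + \<gamma>) / \<gamma>))
                   + sqrt ((J M r piref \<beta> (pistar piref r \<beta>) - J M r piref \<beta> pb) / (2 * \<beta>))))"
  proof
    show "Cov M (pistar piref r \<beta>) \<pi> \<ge>
             ennreal (1 / (sqrt ((\<gamma> + 2 * Pref M P pb \<pi>) * ln ((1 + \<gamma>) / \<gamma>))
                   + sqrt ((J M r piref \<beta> (pistar piref r \<beta>) - J M r piref \<beta> pb) / (2 * \<beta>))))"
      by (rule main_gen[where k=r, OF M ref_pol ref_meas ref_full beta r_bdd r_meas pi_pol pi_meas pb_pol pb_meas pb_int g r_meas conj1])
    show "Cov M (pistar piref r \<beta>) \<pi> \<ge>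
             ennreal (1 / (sqrt ((\<gamma> + 2 * Pref M P \<pi> pb) * ln ((1 + \<gamma>) / \<gamma>))
                   + sqrt ((J M r piref \<beta> (pistar piref r \<beta>) - J M r piref \<beta> pb) / (2 * \<beta>))))"
      by (rule main_gen[where k="\<lambda>s a. - r s a", OF M ref_pol ref_meas ref_full beta r_bdd r_meas pi_pol pi_meas pb_pol pb_meas pb_int g _ conj2]) simp
  qed
qed


end
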